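(* Let $d\ge 1$, $p>1$ and $s\in(0,1)$ with $sp<d$, and let $\mathcal{C}=C(d,p)\,\frac{s(1-s)}{(d-sp)^{p-1}}$ be the fractional Sobolev constant described in the context. Then for every $u\in W^{s,p}(\mathbb{R}^d)$ with $\int_{\mathbb{R}^d}|u(x)|^p\,dx=1$, \[ \int_{\mathbb{R}^d}|u(x)|^p\log|u(x)|\,dx\le \frac{d}{sp^2}\log\left(\mathcal{C}\int_{\mathbb{R}^d}\int_{\mathbb{R}^d}\frac{|u(x)-u(y)|^p}{|x-y|^{d+sp}}\,dx\,dy\right). \]
   Context: $W^{s,p}(\mathbb{R}^d)$ is the completion of $C_c^\infty(\mathbb{R}^d)$ under the norm $(\|u\|_{L^p}^p+[u]_{W^{s,p}}^p)^{1/p}$, where $[u]_{W^{s,p}(\mathbb{R}^d)}^p=\int_{\mathbb{R}^d}\int_{\mathbb{R}^d}\frac{|u(x)-u(y)|^p}{|x-y|^{d+sp}}dx\,dy$. $C(d,p)>0$ is a constant depending only on $d$ and $p$ such that, with $\mathcal{C}=C(d,p)\frac{s(1-s)}{(d-sp)^{p-1}}$ and $p^*_s=\frac{dp}{d-sp}$, the fractional Sobolev inequality $\|u\|_{L^{p^*_s}(\mathbb{R}^d)}\le \mathcal{C}^{1/p}[u]_{W^{s,p}(\mathbb{R}^d)}$ holds for all $s\in(0,1)$ with $sp<d$ and all $u\in W^{s,p}(\mathbb{R}^d)$ (such a constant exists by a theorem of Maz'ya and Shaposhnikova). *)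

theory Defs
  imports "HOL-Analysis.Analysis"
begin

fun iter_dderiv :: "(real^'n::finite) list \<Rightarrow> (real^'n \<Rightarrow> real) \<Rightarrow> real^'n \<Rightarrow> real" where
  "iter_dderiv [] f = f"
| "iter_dderiv (v # vs) f = (\<lambda>x. frechet_derivative (iter_dderiv vs f) (at x) v)"

definition smooth_fun :: "(real^'n::finite \<Rightarrow> real) \<Rightarrow> bool" where
  "smooth_fun f \<longleftrightarrow> (\<forall>vs. \<forall>x. iter_dderiv vs f differentiable (at x))"

definition Cc_inf :: "(real^'n::finite \<Rightarrow> real) set" where
  "Cc_inf = {f. smooth_fun f \<and> compact (closure {x. f x \<noteq> 0})}"

definition gagliardo_pow :: "real \<Rightarrow> real \<Rightarrow> (real^'n::finite \<Rightarrow> real) \<Rightarrow> ennreal" where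
  "gagliardo_pow s p u =
     (\<integral>\<^sup>+ x. \<integral>\<^sup>+ y. ennreal (\<bar>u x - u y\<bar> powr p / dist x y powr (real CARD('n) + s * p)) \<partial>lborel \<partial>lborel)"

definition Lp_pow :: "real \<Rightarrow> (real^'n::finite \<Rightarrow> real) \<Rightarrow> ennreal" where
  "Lp_pow p u = (\<integral>\<^sup>+ x. ennreal (\<bar>u x\<bar> powr p) \<partial>lborel)"

text \<open>W^{s,p}(R^d): the completion of C_c^infinity under the W^{s,p} norm,
  realised as the set of measurable functions that are W^{s,p}-limits of C_c^infinity functions.\<close>
definition Wsp :: "real \<Rightarrow> real \<Rightarrow> (real^'n::finite \<Rightarrow> real) set" where
  "Wsp s p = {u. u \<in> borel_measurable lborel \<and>
     (\<exists>\<phi>. (\<forall>k. \<phi> k \<in> Cc_inf) \<and>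
        ((\<lambda>k. Lp_pow p (\<lambda>x. \<phi> k x - u x) + gagliardo_pow s p (\<lambda>x. \<phi> k x - u x)) \<longlonglongrightarrow> 0))}"

definition ext_integral :: "'a measure \<Rightarrow> ('a \<Rightarrow> real) \<Rightarrow> ereal" where
  "ext_integral M f = enn2ereal (\<integral>\<^sup>+ x. ennreal (f x) \<partial>M) - enn2ereal (\<integral>\<^sup>+ x. ennreal (- f x) \<partial>M)"

end

theory Submission
  imports Defs
begin

lemma ext_integral_le_integral:
  fixes f g :: "'a \<Rightarrow> real"
  assumes g: "integrable M g" and fg: "\<And>x. f x \<le> g x"
  shows "ext_integral M f \<le> ereal (integral\<^sup>L M g)"
proof -
  have fin1: "(\<integral>\<^sup>+ x. ennreal (g x) \<partial>M) < \<infinity>"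
  proof -
    have "(\<integral>\<^sup>+ x. ennreal (g x) \<partial>M) \<le> (\<integral>\<^sup>+ x. ennreal (norm (g x)) \<partial>M)"
      by (intro nn_integral_mono) (simp add: ennreal_leI)
    also have "\<dots> < \<infinity>" using g by (simp add: integrable_iff_bounded)
    finally show ?thesis .
  qed
  have fin2: "(\<integral>\<^sup>+ x. ennreal (- g x) \<partial>M) < \<infinity>"
  proof -
    have "(\<integral>\<^sup>+ x. ennreal (- g x) \<partial>M) \<le> (\<integral>\<^sup>+ x. ennreal (norm (g x)) \<partial>M)"
      by (intro nn_integral_mono) (simp add: ennreal_leI)
    also have "\<dots> < \<infinity>" using g by (simp add: integrable_iff_bounded)
    finally show ?thesis .
  qed
  have "ext_integral M f \<le> enn2ereal (\<integral>\<^sup>+ x. ennreal (g x) \<partial>M) - enn2ereal (\<integral>\<^sup>+ x. ennreal (- g x) \<partial>M)"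
    unfolding ext_integral_def
    by (intro ereal_minus_mono) (auto simp: less_eq_ennreal.rep_eq[symmetric] fg intro!: nn_integral_mono ennreal_leI)
  also have "\<dots> = ereal (integral\<^sup>L M g)"
  proof -
    obtain r1 where r1: "(\<integral>\<^sup>+ x. ennreal (g x) \<partial>M) = ennreal r1" "r1 \<ge> 0"
      using fin1 by (cases "(\<integral>\<^sup>+ x. ennreal (g x) \<partial>M)" rule: ennreal_cases) auto
    obtain r2 where r2: "(\<integral>\<^sup>+ x. ennreal (- g x) \<partial>M) = ennreal r2" "r2 \<ge> 0"
      using fin2 by (cases "(\<integral>\<^sup>+ x. ennreal (- g x) \<partial>M)" rule: ennreal_cases) auto
    show ?thesis using r1 r2 by (simp add: real_lebesgue_integral_def[OF g] enn2ereal_ennreal)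
  qed
  finally show ?thesis .
qed

theorem theorem1p1:
  fixes p s Cdp :: real and u :: "real^'n::finite \<Rightarrow> real"
  assumes p: "p > 1"
    and s: "0 < s" "s < 1" "s * p < real CARD('n)"
    and Cdp_pos: "Cdp > 0"
    and sobolev: "\<And>t (v :: real^'n \<Rightarrow> real). 0 < t \<Longrightarrow> t < 1 \<Longrightarrow> t * p < real CARD('n) \<Longrightarrow> v \<in> Wsp t p \<Longrightarrow>
        Lp_pow (real CARD('n) * p / (real CARD('n) - t * p)) v
          \<le> ennreal (((Cdp * t * (1 - t) / (real CARD('n) - t * p) powr (p - 1)) powr (1 / p)
                      * enn2real (gagliardo_pow t p v) powr (1 / p))
                     powr (real CARD('n) * p / (real CARD('n) - t * p)))"
    and u: "u \<in> Wsp s p"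
    and norm1: "Lp_pow p u = 1"
  shows "ext_integral lborel (\<lambda>x. \<bar>u x\<bar> powr p * ln \<bar>u x\<bar>)
         \<le> ereal (real CARD('n) / (s * p^2) *
              ln ((Cdp * s * (1 - s) / (real CARD('n) - s * p) powr (p - 1)) * enn2real (gagliardo_pow s p u)))"
proof -
  define d where "d = real CARD('n)"
  define C where "C = Cdp * s * (1 - s) / (d - s * p) powr (p - 1)"
  define G where "G = enn2real (gagliardo_pow s p u)"
  define q where "q = d * p / (d - s * p)"
  define a where "a = q - p"
  have dsp: "d - s * p > 0" using s d_def by simp
  have a_eq: "a = s * p^2 / (d - s * p)"
    unfolding a_def q_def using dsp by (simp add: field_simps power2_eq_square)
  have a_pos: "a > 0" unfolding a_eq using s p dsp by simp
  have q_eq: "q = p + a" unfolding a_def by simp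
  have q_pos: "q > 0" using q_eq a_pos p by simp
  have C_pos: "C > 0" unfolding C_def using Cdp_pos s dsp by simp
  have G_nn: "G \<ge> 0" unfolding G_def by simp
  have ratio: "(q / p) / a = d / (s * p^2)"
    unfolding a_eq q_def using dsp p s by (simp add: field_simps power2_eq_square)
  have u_meas: "u \<in> borel_measurable lborel" using u unfolding Wsp_def by simp
  have sob: "Lp_pow q u \<le> ennreal ((C powr (1/p) * G powr (1/p)) powr q)"
    using sobolev[OF s u[unfolded d_def[symmetric]]] unfolding C_def G_def q_def d_def by simp
  define B where "B = (C * G) powr (q / p)"
  have B_eq: "(C powr (1/p) * G powr (1/p)) powr q = B"
    unfolding B_def using C_pos G_nn p
    by (simp add: powr_mult[symmetric] powr_powr)
  define M where "M = enn2real (Lp_pow q u)"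
  have LqM: "Lp_pow q u = ennreal M"
    using sob unfolding M_def B_eq
    by (cases "Lp_pow q u" rule: ennreal_cases) (auto simp: top_unique)
  have M_nn: "M \<ge> 0" unfolding M_def by simp
  have B_nn: "B \<ge> 0" unfolding B_def by simp
  have "ennreal M \<le> ennreal B" using sob LqM B_eq by simp
  then have MB: "M \<le> B" using B_nn by simp
  have mq: "(\<lambda>x. \<bar>u x\<bar> powr q) \<in> borel_measurable lborel" using u_meas by measurable
  have mp: "(\<lambda>x. \<bar>u x\<bar> powr p) \<in> borel_measurable lborel" using u_meas by measurable
  have intq: "integrable lborel (\<lambda>x. \<bar>u x\<bar> powr q)"
    by (rule integrableI_nn_integral_finite[OF mq _ LqM[unfolded Lp_pow_def]]) simp
  have Iq: "integral\<^sup>L lborel (\<lambda>x. \<bar>u x\<bar> powr q) = M"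
    using integral_eq_nn_integral[OF mq] LqM M_nn unfolding Lp_pow_def by simp
  have Lp1: "(\<integral>\<^sup>+ x. ennreal (\<bar>u x\<bar> powr p) \<partial>lborel) = ennreal 1"
    using norm1 unfolding Lp_pow_def by simp
  have intp: "integrable lborel (\<lambda>x. \<bar>u x\<bar> powr p)"
    by (rule integrableI_nn_integral_finite[OF mp _ Lp1]) simp
  have Ip: "integral\<^sup>L lborel (\<lambda>x. \<bar>u x\<bar> powr p) = 1"
    using integral_eq_nn_integral[OF mp] Lp1 by simp
  have M_pos: "M > 0"
  proof (rule ccontr)
    assume "\<not> M > 0"
    then have "M = 0" using M_nn by simp
    then have "(\<integral>\<^sup>+ x. ennreal (\<bar>u x\<bar> powr q) \<partial>lborel) = 0"
      using LqM unfolding Lp_pow_def by simp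
    then have "AE x in lborel. ennreal (\<bar>u x\<bar> powr q) = 0"
      using nn_integral_0_iff_AE[of "\<lambda>x. ennreal (\<bar>u x\<bar> powr q)" lborel] mq by simp
    then have "AE x in lborel. ennreal (\<bar>u x\<bar> powr p) = 0"
      by eventually_elim simp
    then have "(\<integral>\<^sup>+ x. ennreal (\<bar>u x\<bar> powr p) \<partial>lborel) = 0"
      using nn_integral_0_iff_AE[of "\<lambda>x. ennreal (\<bar>u x\<bar> powr p)" lborel] mp by simp
    then show False using Lp1 by simp
  qed
  have CG_pos: "C * G > 0"
  proof (rule ccontr)
    assume "\<not> C * G > 0"
    then have "C * G = 0" using C_pos G_nn by (simp add: less_le)
    then have "B = 0" unfolding B_def by simp
    then show False using MB M_pos by simp
  qed
  define g where "g x = (ln M - 1) / a * \<bar>u x\<bar> powr p + 1 / (a * M) * \<bar>u x\<bar> powr q" for x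
  have fg: "\<bar>u x\<bar> powr p * ln \<bar>u x\<bar> \<le> g x" for x
  proof (cases "u x = 0")
    case True then show ?thesis by (simp add: g_def)
  next
    case False
    define w where "w = \<bar>u x\<bar>"
    have w: "w > 0" using False w_def by simp
    have "ln (w powr a / M) \<le> w powr a / M - 1" using w M_pos by (intro ln_le_minus_one) simp
    also have "ln (w powr a / M) = a * ln w - ln M" using w M_pos by (simp add: ln_div ln_powr)
    finally have "a * ln w \<le> ln M + w powr a / M - 1" by simp
    then have "ln w \<le> (ln M - 1) / a + w powr a / (a * M)"
      using a_pos by (simp add: field_simps)
    then have "w powr p * ln w \<le> w powr p * ((ln M - 1) / a + w powr a / (a * M))"
      by (intro mult_left_mono) simp_all
    also have "\<dots> = g x"
      unfolding g_def w_def[symmetric] q_eq using w by (simp add: powr_add field_simps)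
    finally show ?thesis unfolding w_def .
  qed
  have intg: "integrable lborel g" unfolding g_def using intp intq by simp
  have Ig: "integral\<^sup>L lborel g = ln M / a"
    unfolding g_def using intp intq Ip Iq M_pos a_pos by (simp add: field_simps)
  have "ext_integral lborel (\<lambda>x. \<bar>u x\<bar> powr p * ln \<bar>u x\<bar>) \<le> ereal (ln M / a)"
    using ext_integral_le_integral[OF intg fg] Ig by simp
  also have "ln M / a \<le> ln B / a" using MB M_pos a_pos by (simp add: divide_right_mono)
  also have "ln B = (q / p) * ln (C * G)" unfolding B_def using CG_pos by (simp add: ln_powr)
  also have "(q / p) * ln (C * G) / a = d / (s * p^2) * ln (C * G)"
    using ratio by (metis times_divide_eq_left divide_divide_eq_left mult.commute)
  finally show ?thesis unfolding d_def C_def G_def by simp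
qed

end
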